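(* Let $G$ be a digraph with a fixed upward planar drawing and let $\mathcal{P}$ be a set of pairwise vertex disjoint directed paths in $G$. Then $\prec^*_{\mathcal{P}}$ is a partial order on $\mathcal{P}$.
   Context: An upward planar drawing of a digraph is a plane drawing (no edge crossings) in which every directed edge is a curve monotone increasing in the $y$-direction from tail to head. A path is identified with the set of points of $\mathbb{R}^2$ in its drawing. For a path $P$ with endpoints $(x,y)$, $(x',y')$, $y\le y'$, let $\mathrm{Right}(P):=\{(u,v)\in\mathbb{R}^2: y\le v\le y',\ u'<u \text{ for all } u' \text{ with } (u',v)\in P\}$. A point $p\notin P$ is to the right of $P$ if $p\in\mathrm{Right}(P)$. For vertex disjoint paths $P,Q$, write $Q\prec P$ if some point of $P$ is to the right of $Q$. $\prec^*$ is the transitive closure of $\prec$, and $\prec^*_{\mathcal{P}}$ is the transitive closure of $\prec$ restricted to the paths in $\mathcal{P}$. *)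

theory Defs
  imports "HOL-Analysis.Analysis"
begin

type_synonym point = "real \<times> real"

definition upward_planar_drawing ::
  "'v set \<Rightarrow> ('v \<times> 'v) set \<Rightarrow> ('v \<Rightarrow> point) \<Rightarrow> ('v \<times> 'v \<Rightarrow> real \<Rightarrow> point) \<Rightarrow> bool" where
  "upward_planar_drawing V E pos crv \<longleftrightarrow>
     finite V \<and> E \<subseteq> V \<times> V \<and> inj_on pos V \<and>
     (\<forall>e\<in>E. path (crv e) \<and> pathstart (crv e) = pos (fst e) \<and> pathfinish (crv e) = pos (snd e)
        \<and> strict_mono_on {0..1} (\<lambda>t. snd (crv e t))) \<and>
     \<comment> \<open>no vertex lies on an edge other than at its endpoints\<close>
     (\<forall>e\<in>E. \<forall>v\<in>V. pos v \<in> path_image (crv e) \<longrightarrow> v = fst e \<or> v = snd e) \<and>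
     \<comment> \<open>no crossings: distinct edges meet only in common end vertices\<close>
     (\<forall>e\<in>E. \<forall>e'\<in>E. e \<noteq> e' \<longrightarrow>
        path_image (crv e) \<inter> path_image (crv e') \<subseteq>
          pos ` ({fst e, snd e} \<inter> {fst e', snd e'}))"

definition dir_path :: "'v set \<Rightarrow> ('v \<times> 'v) set \<Rightarrow> 'v list \<Rightarrow> bool" where
  "dir_path V E P \<longleftrightarrow> P \<noteq> [] \<and> distinct P \<and> set P \<subseteq> V \<and>
     (\<forall>i. Suc i < length P \<longrightarrow> (P ! i, P ! Suc i) \<in> E)"

definition path_points :: "('v \<Rightarrow> point) \<Rightarrow> ('v \<times> 'v \<Rightarrow> real \<Rightarrow> point) \<Rightarrow> 'v list \<Rightarrow> point set" where
  "path_points pos crv P =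
     pos ` set P \<union> (\<Union>i\<in>{i. Suc i < length P}. path_image (crv (P ! i, P ! Suc i)))"

definition Right_of :: "('v \<Rightarrow> point) \<Rightarrow> ('v \<times> 'v \<Rightarrow> real \<Rightarrow> point) \<Rightarrow> 'v list \<Rightarrow> point set" where
  "Right_of pos crv P =
     (let y1 = snd (pos (hd P)); y2 = snd (pos (last P)) in
      {(u, v). min y1 y2 \<le> v \<and> v \<le> max y1 y2 \<and>
               (\<forall>u'. (u', v) \<in> path_points pos crv P \<longrightarrow> u' < u)})"

definition right_of :: "('v \<Rightarrow> point) \<Rightarrow> ('v \<times> 'v \<Rightarrow> real \<Rightarrow> point) \<Rightarrow> point \<Rightarrow> 'v list \<Rightarrow> bool" where
  "right_of pos crv p P \<longleftrightarrow> p \<notin> path_points pos crv P \<and> p \<in> Right_of pos crv P"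

definition prec :: "('v \<Rightarrow> point) \<Rightarrow> ('v \<times> 'v \<Rightarrow> real \<Rightarrow> point) \<Rightarrow> 'v list \<Rightarrow> 'v list \<Rightarrow> bool" where
  "prec pos crv Q P \<longleftrightarrow> set Q \<inter> set P = {} \<and>
     (\<exists>p\<in>path_points pos crv P. right_of pos crv p Q)"

definition prec_star_on :: "('v \<Rightarrow> point) \<Rightarrow> ('v \<times> 'v \<Rightarrow> real \<Rightarrow> point) \<Rightarrow> 'v list set \<Rightarrow> ('v list \<times> 'v list) set" where
  "prec_star_on pos crv \<P> = {(Q, P). Q \<in> \<P> \<and> P \<in> \<P> \<and> prec pos crv Q P}\<^sup>+"

end

theory Submission
  imports Defs
begin


definition cyc :: "('a \<Rightarrow> 'a \<Rightarrow> bool) \<Rightarrow> 'a list \<Rightarrow> bool" where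
  "cyc R xs \<longleftrightarrow> xs \<noteq> [] \<and> successively R (xs @ [hd xs])"

lemma cyc_rotate1: assumes c: "cyc R xs" shows "cyc R (rotate1 xs)"
proof (cases xs)
  case Nil then show ?thesis using c by (simp add: cyc_def)
next
  case (Cons a ys)
  show ?thesis
  proof (cases "ys = []")
    case True then show ?thesis using c Cons by simp
  next
    case False
    from c Cons have s: "successively R (a # ys @ [a])" by (simp add: cyc_def)
    hence "R a (hd ys)" "successively R (ys @ [a])" using False
      by (auto simp: successively_Cons neq_Nil_conv)
    then show ?thesis using Cons False
      by (simp add: cyc_def successively_append_iff)
  qed
qed

lemma cyc_rotate: "cyc R xs \<Longrightarrow> cyc R (rotate n xs)"
  by (induction n) (auto intro: cyc_rotate1)

lemma trancl_list:
  assumes "(a, b) \<in> {(x,y). R x y}\<^sup>+"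
  shows "\<exists>xs. xs \<noteq> [] \<and> hd xs = a \<and> successively R (xs @ [b])"
  using assms
proof (induction rule: trancl_induct)
  case (base y) then show ?case by (intro exI[of _ "[a]"]) auto
next
  case (step y z)
  then obtain xs where "xs \<noteq> []" "hd xs = a" "successively R (xs @ [y])" by blast
  then show ?case using step(2)
    by (intro exI[of _ "xs @ [y]"]) (auto simp: successively_append_iff)
qed

lemma acyclic_abstract:
  fixes lo hi :: "'a \<Rightarrow> real" and f :: "'a \<Rightarrow> real \<Rightarrow> real"
  assumes H1: "\<And>P. P \<in> S \<Longrightarrow> lo P \<le> hi P \<and> continuous_on {lo P..hi P} (f P)"
    and H2: "\<And>A B y. A \<in> S \<Longrightarrow> B \<in> S \<Longrightarrow> A \<noteq> B \<Longrightarrow> y \<in> {lo A..hi A} \<Longrightarrow> y \<in> {lo B..hi B}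
             \<Longrightarrow> f A y \<noteq> f B y"
    and R: "\<And>Q P. R Q P \<longleftrightarrow> Q \<in> S \<and> P \<in> S \<and> Q \<noteq> P \<and>
             (\<exists>y. y \<in> {lo Q..hi Q} \<and> y \<in> {lo P..hi P} \<and> f Q y < f P y)"
  shows "irrefl ({(x,y). R x y}\<^sup>+)"
proof -
  have coh: "f A z < f B z" if "R A B" "z \<in> {lo A..hi A}" "z \<in> {lo B..hi B}" for A B z
  proof (rule ccontr)
    assume nz: "\<not> f A z < f B z"
    from that(1) R obtain y where y: "A \<in> S" "B \<in> S" "A \<noteq> B" "y \<in> {lo A..hi A}" "y \<in> {lo B..hi B}"
      "f A y < f B y" by blast
    have "f A z \<noteq> f B z" using H2 y that by blast
    with nz have lt: "f B z < f A z" by simp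
    define g where "g t = f B t - f A t" for t
    have cg: "continuous_on {min y z..max y z} g" unfolding g_def
      apply (intro continuous_intros)
      using H1[OF y(1)] H1[OF y(2)] y that
      by (auto elim!: continuous_on_subset)
    have gy: "g y > 0" and gz: "g z < 0" using y lt by (auto simp: g_def)
    have "\<exists>t. min y z \<le> t \<and> t \<le> max y z \<and> g t = 0"
    proof (cases "y \<le> z")
      case True
      then show ?thesis using IVT2'[of g z 0 y] cg gy gz by (auto simp: min_def max_def)
    next
      case False
      then show ?thesis using IVT'[of g z 0 y] cg gy gz by (auto simp: min_def max_def)
    qed
    then obtain t where t: "min y z \<le> t" "t \<le> max y z" "g t = 0" by blast
    have "t \<in> {lo A..hi A}" "t \<in> {lo B..hi B}" using t y that by auto
    with H2[OF y(1,2,3)] t(3) show False by (force simp: g_def)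
  qed
  have nocyc: "\<not> cyc R xs" for xs
  proof (induction "length xs" arbitrary: xs rule: less_induct)
    case less
    show ?case
    proof
      assume c: "cyc R xs"
      consider "length xs = 1" | "length xs = 2" | "length xs \<ge> 3"
      proof -
        have "length xs \<noteq> 0" using c by (simp add: cyc_def)
        then have "length xs = 1 \<or> length xs = 2 \<or> length xs \<ge> 3" by linarith
        then show ?thesis using that by blast
      qed
      then show False
      proof cases
        case 1
        then obtain a where "xs = [a]" by (cases xs) auto
        with c show False by (simp add: cyc_def R)
      next
        case 2
        then obtain a b where xs: "xs = [a,b]"
          by (cases xs; cases "tl xs") auto
        with c have "R a b" "R b a" by (auto simp: cyc_def)
        then obtain y where y: "y \<in> {lo a..hi a}" "y \<in> {lo b..hi b}" "f b y < f a y"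
          using R by blast
        from coh[OF \<open>R a b\<close> y(1,2)] y(3) show False by simp
      next
        case 3
        define m where "m = arg_min_list hi xs"
        have mx: "m \<in> set xs" using c arg_min_list_in m_def by (auto simp: cyc_def)
        have mmin: "hi m \<le> hi x" if "x \<in> set xs" for x
          using f_arg_min_list_f[of xs hi] c that m_def by (auto simp: cyc_def)
        obtain k where k: "k < length xs" "xs ! k = m" using mx by (auto simp: in_set_conv_nth)
        define ys where "ys = rotate k xs"
        have cy: "cyc R ys" using c cyc_rotate ys_def by blast
        have hy: "hd ys = m" using k c by (simp add: ys_def hd_rotate_conv_nth cyc_def)
        have ly: "length ys = length xs" "set ys = set xs" by (auto simp: ys_def)
        have "length ys \<ge> 3" using ly 3 by simp
        then obtain m' b rest where ys0: "ys = m' # b # rest" and rne: "rest \<noteq> []"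
        proof (cases ys)
          case Nil then show ?thesis using \<open>length ys \<ge> 3\<close> by simp
        next
          case (Cons m' t)
          show ?thesis
          proof (cases t)
            case Nil then show ?thesis using Cons \<open>length ys \<ge> 3\<close> by simp
          next
            case (Cons b rest)
            have "rest \<noteq> []" using Cons \<open>ys = m' # t\<close> \<open>length ys \<ge> 3\<close> by (cases rest) simp_all
            then show ?thesis using Cons \<open>ys = m' # t\<close> by (intro that[of m' b rest]) auto
          qed
        qed
        have ys: "ys = m # b # rest" using ys0 hy by simp
        define z where "z = last rest"
        have s: "successively R (m # b # rest @ [m])" using cy ys by (simp add: cyc_def)
        have Rmb: "R m b" using s by simp
        have s2: "successively R (b # rest) \<and> R (last (b # rest)) m"
          using s successively_append_iff[of R "b # rest" "[m]"] by simp
        have sbr: "successively R (b # rest)" using s2 by blast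
        have Rzm: "R z m" using s2 rne unfolding z_def by simp
        have "b \<in> set ys" "z \<in> set ys" using ys rne by (simp_all add: z_def)
        then have bin: "b \<in> set xs" "z \<in> set xs" using ly(2) by simp_all
        have hb: "hi m \<le> hi b" "hi m \<le> hi z" using mmin[OF bin(1)] mmin[OF bin(2)] by simp_all
        have "m \<in> S" using Rmb unfolding R by blast
        then have "lo m \<le> hi m" using H1 by blast
        then have "hi m \<in> {lo m..hi m}" by simp
        moreover have "hi m \<in> {lo b..hi b}"
        proof -
          obtain y where "y \<in> {lo m..hi m}" "y \<in> {lo b..hi b}" using Rmb unfolding R by blast
          then show ?thesis using hb by auto
        qed
        moreover have "hi m \<in> {lo z..hi z}"
        proof -
          obtain y where "y \<in> {lo m..hi m}" "y \<in> {lo z..hi z}" using Rzm unfolding R by blast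
          then show ?thesis using hb by auto
        qed
        ultimately have l1: "f m (hi m) < f b (hi m)" and l2: "f z (hi m) < f m (hi m)"
          using coh[OF Rmb, of "hi m"] coh[OF Rzm, of "hi m"] by blast+
        have zb: "z \<noteq> b"
        proof
          assume "z = b"
          then have "R b m" using Rzm by simp
          from coh[OF this, of "hi m"] l1 \<open>hi m \<in> {lo m..hi m}\<close> \<open>hi m \<in> {lo b..hi b}\<close> show False
            by linarith
        qed
        have "z \<in> S" "b \<in> S" using Rmb Rzm unfolding R by blast+
        have Rzb: "R z b" unfolding R
          using \<open>z \<in> S\<close> \<open>b \<in> S\<close> zb l1 l2
          \<open>hi m \<in> {lo b..hi b}\<close> \<open>hi m \<in> {lo z..hi z}\<close> by (meson order.strict_trans)
        have "cyc R (b # rest)" unfolding cyc_def using sbr Rzb rne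
            successively_append_iff[of R "b # rest" "[b]"]
          by (simp add: z_def)
        moreover have "length (b # rest) < length xs" using ly ys by simp
        ultimately show False using less by blast
      qed
    qed
  qed
  show ?thesis unfolding irrefl_def
  proof (intro allI notI)
    fix a assume "(a, a) \<in> {(x,y). R x y}\<^sup>+"
    then obtain xs where "xs \<noteq> []" "hd xs = a" "successively R (xs @ [a])"
      using trancl_list[of a a R] by blast
    then have "cyc R xs" by (simp add: cyc_def)
    with nocyc show False by blast
  qed
qed



lemma edge_graph:
  fixes c :: "real \<Rightarrow> real \<times> real"
  assumes p: "path c" and sm: "strict_mono_on {0..1} (\<lambda>t. snd (c t))"
  shows "snd (c 0) < snd (c 1) \<and> (\<exists>g. continuous_on {snd (c 0)..snd (c 1)} g \<and>
           path_image c = (\<lambda>t. (g t, t)) ` {snd (c 0)..snd (c 1)})"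
proof -
  define h where "h s = snd (c s)" for s
  have cc: "continuous_on {0..1} c" using p by (simp add: path_def)
  have ch: "continuous_on {0..1} h" unfolding h_def by (intro continuous_intros cc)
  have smh: "strict_mono_on {0..1} h" using sm by (simp add: h_def[abs_def])
  have lt: "h 0 < h 1" using strict_mono_onD[OF smh] by simp
  have img: "h ` {0..1} = {h 0..h 1}"
  proof
    show "h ` {0..1} \<subseteq> {h 0..h 1}"
      using strict_mono_on_leD[OF smh] by auto
    show "{h 0..h 1} \<subseteq> h ` {0..1}"
    proof
      fix y assume "y \<in> {h 0..h 1}"
      then obtain x where "0 \<le> x" "x \<le> 1" "h x = y" using IVT'[of h 0 y 1] ch by auto
      then show "y \<in> h ` {0..1}" by force
    qed
  qed
  have inj: "inj_on h {0..1}" using strict_mono_on_imp_inj_on[OF smh] .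
  define hi where "hi = inv_into {0..1} h"
  have hih: "hi (h x) = x" if "x \<in> {0..1}" for x using inj that by (simp add: hi_def)
  have chi: "continuous_on (h ` {0..1}) hi"
    by (rule continuous_on_inv[OF ch compact_Icc]) (use hih in blast)
  have hiin: "hi y \<in> {0..1}" if "y \<in> h ` {0..1}" for y
    using that hih by auto
  define g where "g t = fst (c (hi t))" for t
  have cg: "continuous_on (h ` {0..1}) g" unfolding g_def
    apply (intro continuous_on_fst)
    apply (rule continuous_on_compose2[OF cc chi])
    using hiin by blast
  have "path_image c = (\<lambda>t. (g t, t)) ` (h ` {0..1})"
    unfolding path_image_def image_image
  proof (rule image_cong[OF refl])
    fix x :: real assume "x \<in> {0..1}"
    then have "hi (h x) = x" by (rule hih)
    then show "c x = (g (h x), h x)" by (simp add: g_def h_def)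
  qed
  then show ?thesis using lt cg img by (auto simp: h_def)
qed



lemma path_points_Cons2:
  assumes "pos v \<in> path_image (crv (v, w))"
  shows "path_points pos crv (v # w # rest) = path_image (crv (v, w)) \<union> path_points pos crv (w # rest)"
proof -
  have I: "{i. Suc i < length (v # w # rest)} = insert 0 (Suc ` {j. Suc j < length (w # rest)})"
    by (auto simp: image_def gr0_conv_Suc)
  show ?thesis using assms unfolding path_points_def I by auto
qed

lemma dir_path_Cons2:
  assumes "dir_path V E (v # w # rest)"
  shows "dir_path V E (w # rest)" "(v, w) \<in> E"
proof -
  have "(v # w # rest) ! 0 = v" "(v # w # rest) ! Suc 0 = w" by simp_all
  then show "(v, w) \<in> E" using assms unfolding dir_path_def by (metis length_Cons zero_less_Suc Suc_less_eq)
  show "dir_path V E (w # rest)" using assms unfolding dir_path_def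
    by (metis Suc_less_eq distinct.simps(2) length_Cons list.distinct(1) list.set_intros(2) nth_Cons_Suc subset_code(1) set_subset_Cons)
qed

lemma path_graph:
  assumes D: "upward_planar_drawing V E pos crv" and P: "dir_path V E P"
  shows "snd (pos (hd P)) \<le> snd (pos (last P)) \<and> (\<exists>g. continuous_on {snd (pos (hd P))..snd (pos (last P))} g \<and>
           path_points pos crv P = (\<lambda>t. (g t, t)) ` {snd (pos (hd P))..snd (pos (last P))})"
  using P
proof (induction P rule: induct_list012)
  case 1 then show ?case by (simp add: dir_path_def)
next
  case (2 v)
  have "path_points pos crv [v] = {pos v}" by (simp add: path_points_def)
  also have "\<dots> = (\<lambda>t. ((\<lambda>_. fst (pos v)) t, t)) ` {snd (pos v)..snd (pos v)}" by simp
  finally show ?case by (intro conjI exI[of _ "\<lambda>_. fst (pos v)"]) auto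
next
  case (3 v w rest)
  have dp: "dir_path V E (w # rest)" and e: "(v, w) \<in> E" using dir_path_Cons2[OF "3.prems"] by auto
  from "3.IH"(2)[OF dp] obtain g2 where le2: "snd (pos w) \<le> snd (pos (last (w # rest)))"
    and cg2: "continuous_on {snd (pos w)..snd (pos (last (w # rest)))} g2"
    and pp2: "path_points pos crv (w # rest) = (\<lambda>t. (g2 t, t)) ` {snd (pos w)..snd (pos (last (w # rest)))}"
    by auto
  let ?c = "crv (v, w)"
  have cp: "path ?c" "pathstart ?c = pos v" "pathfinish ?c = pos w"
    "strict_mono_on {0..1} (\<lambda>t. snd (?c t))"
    using D e unfolding upward_planar_drawing_def by auto
  have c0: "?c 0 = pos v" "?c 1 = pos w" using cp by (simp_all add: pathstart_def pathfinish_def)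
  from edge_graph[OF cp(1) cp(4)] c0 obtain g1 where lt1: "snd (pos v) < snd (pos w)"
    and cg1: "continuous_on {snd (pos v)..snd (pos w)} g1"
    and pi1: "path_image ?c = (\<lambda>t. (g1 t, t)) ` {snd (pos v)..snd (pos w)}" by auto
  define a where "a = snd (pos v)"
  define b where "b = snd (pos w)"
  define cc where "cc = snd (pos (last (w # rest)))"
  have ab: "a < b" and bc: "b \<le> cc" using lt1 le2 by (simp_all add: a_def b_def cc_def)
  have "pos w \<in> path_image ?c" using cp(3) pathfinish_in_path_image[of ?c] by simp
  then have g1b: "g1 b = fst (pos w)" using pi1 unfolding b_def by (auto simp: prod_eq_iff)
  have "pos w \<in> path_points pos crv (w # rest)" by (simp add: path_points_def)
  then have g2b: "g2 b = fst (pos w)" using pp2 unfolding b_def by (auto simp: prod_eq_iff)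
  define g where "g t = (if t \<le> b then g1 t else g2 t)" for t
  have cg: "continuous_on {a..cc} g"
    unfolding g_def
  proof (rule continuous_on_cases_le[where h = "\<lambda>t. t", OF _ _ continuous_on_id])
    have "{x \<in> {a..cc}. x \<le> b} \<subseteq> {a..b}" by auto
    then show "continuous_on {x \<in> {a..cc}. x \<le> b} g1" using cg1 continuous_on_subset
      unfolding a_def b_def by blast
    have "{x \<in> {a..cc}. b \<le> x} \<subseteq> {b..cc}" by auto
    then show "continuous_on {x \<in> {a..cc}. b \<le> x} g2" using cg2 continuous_on_subset
      unfolding b_def cc_def by blast
    show "\<And>x. x \<in> {a..cc} \<Longrightarrow> x = b \<Longrightarrow> g1 x = g2 x" using g1b g2b by simp
  qed
  have pv: "pos v \<in> path_image ?c" using cp(2) pathstart_in_path_image[of ?c] by simp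
  have "path_points pos crv (v # w # rest) = path_image ?c \<union> path_points pos crv (w # rest)"
    by (rule path_points_Cons2[where pos=pos and crv=crv and v=v and w=w, OF pv])
  also have "\<dots> = (\<lambda>t. (g t, t)) ` {a..cc}"
  proof
    show "path_image ?c \<union> path_points pos crv (w # rest) \<subseteq> (\<lambda>t. (g t, t)) ` {a..cc}"
    proof
      fix p assume "p \<in> path_image ?c \<union> path_points pos crv (w # rest)"
      then consider t where "t \<in> {a..b}" "p = (g1 t, t)" | t where "t \<in> {b..cc}" "p = (g2 t, t)"
        using pi1 pp2 unfolding a_def b_def cc_def by blast
      then show "p \<in> (\<lambda>t. (g t, t)) ` {a..cc}"
      proof cases
        case 1 then show ?thesis using bc by (auto simp: g_def image_def intro!: bexI[of _ t])
      next
        case 2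
        have "p = (g t, t)" using 2 g1b g2b by (cases "t \<le> b") (auto simp: g_def)
        then show ?thesis using 2 ab by auto
      qed
    qed
    show "(\<lambda>t. (g t, t)) ` {a..cc} \<subseteq> path_image ?c \<union> path_points pos crv (w # rest)"
    proof
      fix p assume "p \<in> (\<lambda>t. (g t, t)) ` {a..cc}"
      then obtain t where t: "t \<in> {a..cc}" "p = (g t, t)" by auto
      show "p \<in> path_image ?c \<union> path_points pos crv (w # rest)"
      proof (cases "t \<le> b")
        case True
        then have "p = (g1 t, t)" "t \<in> {a..b}" using t by (auto simp: g_def)
        then show ?thesis using pi1 unfolding a_def b_def by auto
      next
        case False
        then have "p = (g2 t, t)" "t \<in> {b..cc}" using t by (auto simp: g_def)
        then show ?thesis using pp2 unfolding b_def cc_def by auto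
      qed
    qed
  qed
  finally show ?case using cg ab bc unfolding a_def cc_def by (intro conjI exI[of _ g]) auto
qed



lemma points_disjoint:
  assumes D: "upward_planar_drawing V E pos crv" and A: "dir_path V E A" and B: "dir_path V E B"
    and dj: "set A \<inter> set B = {}"
  shows "path_points pos crv A \<inter> path_points pos crv B = {}"
proof -
  have inj: "inj_on pos V" using D unfolding upward_planar_drawing_def by simp
  have vert: "\<And>e v. e \<in> E \<Longrightarrow> v \<in> V \<Longrightarrow> pos v \<in> path_image (crv e) \<Longrightarrow> v = fst e \<or> v = snd e"
    using D unfolding upward_planar_drawing_def by (elim conjE) blast
  have cross: "\<And>e e'. e \<in> E \<Longrightarrow> e' \<in> E \<Longrightarrow> e \<noteq> e' \<Longrightarrow>
        path_image (crv e) \<inter> path_image (crv e') \<subseteq> pos ` ({fst e, snd e} \<inter> {fst e', snd e'})"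
    using D unfolding upward_planar_drawing_def by (elim conjE) blast
  have AV: "set A \<subseteq> V" and BV: "set B \<subseteq> V" using A B by (auto simp: dir_path_def)
  have AE: "(A ! i, A ! Suc i) \<in> E" if "Suc i < length A" for i using A that by (auto simp: dir_path_def)
  have BE: "(B ! i, B ! Suc i) \<in> E" if "Suc i < length B" for i using B that by (auto simp: dir_path_def)
  have Ain: "A ! i \<in> set A" "A ! Suc i \<in> set A" if "Suc i < length A" for i using that by auto
  have Bin: "B ! i \<in> set B" "B ! Suc i \<in> set B" if "Suc i < length B" for i using that by auto
  show ?thesis
  proof (rule ccontr)
    assume "path_points pos crv A \<inter> path_points pos crv B \<noteq> {}"
    then obtain p where pA: "p \<in> path_points pos crv A" and pB: "p \<in> path_points pos crv B" by blast
    consider a where "a \<in> set A" "p = pos a" | i where "Suc i < length A" "p \<in> path_image (crv (A ! i, A ! Suc i))"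
      using pA unfolding path_points_def by blast
    then show False
    proof cases
      case (1 a)
      consider b where "b \<in> set B" "p = pos b" | j where "Suc j < length B" "p \<in> path_image (crv (B ! j, B ! Suc j))"
        using pB unfolding path_points_def by blast
      then show False
      proof cases
        case (1 b)
        then have "a = b" using \<open>a \<in> set A\<close> \<open>p = pos a\<close> AV BV inj by (metis inj_onD subsetD)
        then show False using dj 1 \<open>a \<in> set A\<close> by blast
      next
        case (2 j)
        have "a = B ! j \<or> a = B ! Suc j" using vert[OF BE[OF 2(1)], of a] 2(2) \<open>p = pos a\<close> \<open>a \<in> set A\<close> AV by auto
        then show False using Bin[OF 2(1)] dj \<open>a \<in> set A\<close> by blast
      qed
    next
      case (2 i)
      consider b where "b \<in> set B" "p = pos b" | j where "Suc j < length B" "p \<in> path_image (crv (B ! j, B ! Suc j))"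
        using pB unfolding path_points_def by blast
      then show False
      proof cases
        case (1 b)
        have "b = A ! i \<or> b = A ! Suc i" using vert[OF AE[OF 2(1)], of b] 2(2) 1 BV by auto
        then show False using Ain[OF 2(1)] dj 1 by blast
      next
        case (2 j)
        have ne: "(A ! i, A ! Suc i) \<noteq> (B ! j, B ! Suc j)" using Ain[OF \<open>Suc i < length A\<close>] Bin[OF 2(1)] dj by auto
        have "p \<in> pos ` ({A ! i, A ! Suc i} \<inter> {B ! j, B ! Suc j})"
          using cross[OF AE[OF \<open>Suc i < length A\<close>] BE[OF 2(1)] ne] 2(2) \<open>p \<in> path_image (crv (A ! i, A ! Suc i))\<close> by auto
        moreover have "{A ! i, A ! Suc i} \<inter> {B ! j, B ! Suc j} = {}"
          using Ain[OF \<open>Suc i < length A\<close>] Bin[OF 2(1)] dj by auto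
        ultimately show False by simp
      qed
    qed
  qed
qed



theorem lemma8:
  fixes V :: "'v set" and E :: "('v \<times> 'v) set"
    and pos :: "'v \<Rightarrow> real \<times> real" and crv :: "'v \<times> 'v \<Rightarrow> real \<Rightarrow> real \<times> real"
    and \<P> :: "'v list set"
  assumes "upward_planar_drawing V E pos crv"
    and "\<forall>P\<in>\<P>. dir_path V E P"
    and "\<forall>P\<in>\<P>. \<forall>Q\<in>\<P>. P \<noteq> Q \<longrightarrow> set P \<inter> set Q = {}"
  shows "irrefl (prec_star_on pos crv \<P>) \<and> trans (prec_star_on pos crv \<P>)"
proof
  show "trans (prec_star_on pos crv \<P>)" unfolding prec_star_on_def by (rule trans_trancl)
next
  note D = assms(1)
  define lo where "lo P = snd (pos (hd P))" for P :: "'v list"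
  define hi where "hi P = snd (pos (last P))" for P :: "'v list"
  have G: "lo P \<le> hi P \<and> (\<exists>g. continuous_on {lo P..hi P} g \<and>
           path_points pos crv P = (\<lambda>t. (g t, t)) ` {lo P..hi P})" if "P \<in> \<P>" for P
    using path_graph[OF D, of P] assms(2) that unfolding lo_def hi_def by blast
  define F where "F P = (SOME g. continuous_on {lo P..hi P} g \<and>
           path_points pos crv P = (\<lambda>t. (g t, t)) ` {lo P..hi P})" for P
  have F: "continuous_on {lo P..hi P} (F P) \<and>
           path_points pos crv P = (\<lambda>t. (F P t, t)) ` {lo P..hi P}" if "P \<in> \<P>" for P
    unfolding F_def using G[OF that] someI_ex[of "\<lambda>g. continuous_on {lo P..hi P} g \<and> path_points pos crv P = (\<lambda>t. (g t, t)) ` {lo P..hi P}"] by blast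
  have LH: "lo P \<le> hi P" if "P \<in> \<P>" for P using G[OF that] by blast
  define Rp where "Rp Q P \<longleftrightarrow> Q \<in> \<P> \<and> P \<in> \<P> \<and> Q \<noteq> P \<and>
             (\<exists>y. y \<in> {lo Q..hi Q} \<and> y \<in> {lo P..hi P} \<and> F Q y < F P y)" for Q P
  have H2: "F A y \<noteq> F B y" if "A \<in> \<P>" "B \<in> \<P>" "A \<noteq> B" "y \<in> {lo A..hi A}" "y \<in> {lo B..hi B}"
    for A B y
  proof
    assume eq: "F A y = F B y"
    have "(F A y, y) \<in> path_points pos crv A" using F[OF that(1)] that(4) by auto
    moreover have "(F A y, y) \<in> path_points pos crv B" using F[OF that(2)] that(5) eq by auto
    moreover have "path_points pos crv A \<inter> path_points pos crv B = {}"
      using points_disjoint[OF D] assms(2,3) that(1-3) by blast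
    ultimately show False by blast
  qed
  have key: "prec pos crv Q P \<longleftrightarrow> Rp Q P" if Q: "Q \<in> \<P>" and P: "P \<in> \<P>" for Q P
  proof
    assume pr: "prec pos crv Q P"
    then have dj: "set Q \<inter> set P = {}" and ex: "\<exists>p\<in>path_points pos crv P. right_of pos crv p Q"
      unfolding prec_def by auto
    have "Q \<noteq> []" using assms(2) Q by (simp add: dir_path_def)
    then have QP: "Q \<noteq> P" using dj by auto
    from ex obtain p where pP: "p \<in> path_points pos crv P" and rp: "right_of pos crv p Q" by blast
    from pP F[OF P] obtain t where t: "t \<in> {lo P..hi P}" "p = (F P t, t)" by auto
    have RQ: "p \<in> Right_of pos crv Q" using rp by (simp add: right_of_def)
    have mm: "min (lo Q) (hi Q) = lo Q" "max (lo Q) (hi Q) = hi Q" using LH[OF Q] by auto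
    from RQ t have tQ: "lo Q \<le> t" "t \<le> hi Q"
      and all: "\<forall>u'. (u', t) \<in> path_points pos crv Q \<longrightarrow> u' < F P t"
      unfolding Right_of_def Let_def lo_def[symmetric] hi_def[symmetric] mm by auto
    have "(F Q t, t) \<in> path_points pos crv Q" using F[OF Q] tQ by auto
    with all have "F Q t < F P t" by blast
    then show "Rp Q P" unfolding Rp_def using Q P QP t tQ by auto
  next
    assume "Rp Q P"
    then obtain y where QP: "Q \<noteq> P" and y: "y \<in> {lo Q..hi Q}" "y \<in> {lo P..hi P}" "F Q y < F P y"
      unfolding Rp_def by blast
    have dj: "set Q \<inter> set P = {}" using assms(3) Q P QP by blast
    have pP: "(F P y, y) \<in> path_points pos crv P" using F[OF P] y(2) by auto
    have onQ: "u' = F Q y" if "(u', y) \<in> path_points pos crv Q" for u'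
      using that F[OF Q] by auto
    have nQ: "(F P y, y) \<notin> path_points pos crv Q" using onQ y(3) by force
    have mm: "min (lo Q) (hi Q) = lo Q" "max (lo Q) (hi Q) = hi Q" using LH[OF Q] by auto
    have "(F P y, y) \<in> Right_of pos crv Q"
      unfolding Right_of_def Let_def lo_def[symmetric] hi_def[symmetric] mm
      using y onQ by auto
    then show "prec pos crv Q P" unfolding prec_def right_of_def using dj pP nQ by blast
  qed
  have eqR: "{(Q, P). Q \<in> \<P> \<and> P \<in> \<P> \<and> prec pos crv Q P} = {(x, y). Rp x y}"
    using key unfolding Rp_def by auto
  have "irrefl ({(x, y). Rp x y}\<^sup>+)"
  proof (rule acyclic_abstract[where S = \<P> and lo = lo and hi = hi and f = F])
    show "\<And>P. P \<in> \<P> \<Longrightarrow> lo P \<le> hi P \<and> continuous_on {lo P..hi P} (F P)" using LH F by blast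
    show "\<And>A B y. A \<in> \<P> \<Longrightarrow> B \<in> \<P> \<Longrightarrow> A \<noteq> B \<Longrightarrow> y \<in> {lo A..hi A} \<Longrightarrow> y \<in> {lo B..hi B}
             \<Longrightarrow> F A y \<noteq> F B y" using H2 by blast
    show "\<And>Q P. Rp Q P = (Q \<in> \<P> \<and> P \<in> \<P> \<and> Q \<noteq> P \<and>
             (\<exists>y. y \<in> {lo Q..hi Q} \<and> y \<in> {lo P..hi P} \<and> F Q y < F P y))" by (rule Rp_def)
  qed
  then show "irrefl (prec_star_on pos crv \<P>)" unfolding prec_star_on_def eqR .
qed


end
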